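(* Let $C'$, $S$, $\widehat C$ be as in the context. Then \[ \ell(\widehat C)=\ell(C')+\hat N-\check N . \]
   Context: A column is a finite sequence of entries listed top to bottom; for a sequence $C$, $\ell(C)$ is the number of pairs $i<j$ with $C(i)>C(j)$. $C'=(C'(1),\ldots,C'(c'))$ is a sequence of distinct positive integers and $S$ is a set of $c$ positive integers, $c\in\{c',c'+1\}$, such that with $s_1<\cdots<s_c$ the elements of $S$ and $t_1<\cdots<t_{c'}$ the entries of $C'$ sorted, $s_r\le t_r$ for $r\le c'$. The column $\widehat C$ of length $c$ is built as follows: every $x\in S\cap C'$ is placed in the row where $x$ occurs in $C'$; if $c=c'+1$, the largest element of $S\setminus C'$ is placed in row $c$; the remaining elements of $S\setminus C'$, in decreasing order, are placed in the rows occupied in $C'$ by the elements of $C'\setminus S$, in decreasing order (the $k$-th largest next to the $k$-th largest). Pivots: row $r$ is a pivot row if either $r\le c'$ and $\widehat C(r)<C'(r)$, or $r=c'+1\le c$. With pivot rows $q_1,\ldots,q_p$, put $b_j=\widehat C(q_j)$, $d_j=C'(q_j)$ if $q_j\le c'$ and $d_j=\infty$ otherwise. Define $\check N=\sum_{j=1}^p\#\{r>q_j,\ r\le c':\ C'(r)\in S,\ b_j<C'(r)<d_j\}$ and $\hat N=\sum_{j=1}^p\#\{r<q_j:\ C'(r)\in S,\ b_j<C'(r)<d_j\}$. *)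

theory Defs
  imports Main
begin

text \<open>Columns are lists; row r (1-based in the paper) is list index r-1 here.\<close>

definition inv_count :: "nat list \<Rightarrow> nat" where
  "inv_count C = card {(i, j). i < j \<and> j < length C \<and> C ! j < C ! i}"

definition admissible :: "nat list \<Rightarrow> nat set \<Rightarrow> bool" where
  "admissible C' S \<longleftrightarrow>
     distinct C' \<and> (\<forall>x\<in>set C'. 0 < x) \<and> finite S \<and> (\<forall>x\<in>S. 0 < x) \<and>
     (card S = length C' \<or> card S = length C' + 1) \<and>
     (\<forall>r < length C'. sorted_list_of_set S ! r \<le> sort C' ! r)"

text \<open>Elements of S - C' that fill the rows of C' - S (excluding the largest
  element of S - C' when c = c'+1).\<close>
definition fill_set :: "nat list \<Rightarrow> nat set \<Rightarrow> nat set" where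
  "fill_set C' S = (if card S = length C' + 1 then (S - set C') - {Max (S - set C')}
                    else S - set C')"

definition hat_entry :: "nat list \<Rightarrow> nat set \<Rightarrow> nat \<Rightarrow> nat" where
  "hat_entry C' S r =
     (if r < length C' then
        (if C' ! r \<in> S then C' ! r
         else rev (sorted_list_of_set (fill_set C' S)) ! card {y \<in> set C' - S. C' ! r < y})
      else Max (S - set C'))"

definition hatC :: "nat list \<Rightarrow> nat set \<Rightarrow> nat list" where
  "hatC C' S = map (hat_entry C' S) [0..<card S]"

definition pivots :: "nat list \<Rightarrow> nat set \<Rightarrow> nat set" where
  "pivots C' S = {q. (q < length C' \<and> hatC C' S ! q < C' ! q) \<or>
                      (q = length C' \<and> length C' < card S)}"

text \<open>Condition b_j < C'(r) < d_j, with d_j = infinity for the pivot row c'+1.\<close>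
definition between :: "nat list \<Rightarrow> nat set \<Rightarrow> nat \<Rightarrow> nat \<Rightarrow> bool" where
  "between C' S q r \<longleftrightarrow> hatC C' S ! q < C' ! r \<and> (q < length C' \<longrightarrow> C' ! r < C' ! q)"

definition Ncheck :: "nat list \<Rightarrow> nat set \<Rightarrow> nat" where
  "Ncheck C' S = (\<Sum>q\<in>pivots C' S.
      card {r. q < r \<and> r < length C' \<and> C' ! r \<in> S \<and> between C' S q r})"

definition Nhat :: "nat list \<Rightarrow> nat set \<Rightarrow> nat" where
  "Nhat C' S = (\<Sum>q\<in>pivots C' S.
      card {r. r < q \<and> C' ! r \<in> S \<and> between C' S q r})"

end

theory Submission
  imports Defs
begin



lemma card_lt_sum: fixes q :: nat shows "int (card {r. r < q \<and> P r}) = (\<Sum>r<q. if P r then 1 else 0)"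
proof (induction q)
  case 0 then show ?case by simp
next
  case (Suc q)
  have "{r. r < Suc q \<and> P r} = {r. r < q \<and> P r} \<union> (if P q then {q} else {})" by (auto simp: less_Suc_eq)
  then show ?case using Suc by (auto simp: card_insert_if)
qed

lemma card_gt_sum: fixes q n :: nat shows "int (card {r. q < r \<and> r < n \<and> P r}) = (\<Sum>r\<in>{q<..<n}. if P r then 1 else 0)"
proof -
  have "{r. q < r \<and> r < n \<and> P r} = {r\<in>{q<..<n}. P r}" by auto
  then have "int (card {r. q < r \<and> r < n \<and> P r}) = (\<Sum>r\<in>{r\<in>{q<..<n}. P r}. 1)" by simp
  also have "\<dots> = (\<Sum>r\<in>{q<..<n}. if P r then 1 else 0)" by (rule sum.inter_filter) simp
  finally show ?thesis .
qed

lemma card_pairs: fixes n :: nat shows "card {(i, j). i < j \<and> j < n \<and> P i j} = (\<Sum>j<n. card {i. i < j \<and> P i j})"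
proof (induction n)
  case 0 then show ?case by simp
next
  case (Suc n)
  have e: "{(i, j). i < j \<and> j < Suc n \<and> P i j} = {(i, j). i < j \<and> j < n \<and> P i j} \<union> (\<lambda>i. (i, n)) ` {i. i < n \<and> P i n}" by (auto simp: less_Suc_eq)
  have f: "finite {(i, j). i < j \<and> j < n \<and> P i j}"
    by (rule finite_subset[of _ "{..<n} \<times> {..<n}"]) auto
  have "card {(i, j). i < j \<and> j < Suc n \<and> P i j} = card {(i, j). i < j \<and> j < n \<and> P i j} + card ((\<lambda>i. (i, n)) ` {i. i < n \<and> P i n})"
    unfolding e by (rule card_Un_disjoint) (use f in auto)
  also have "card ((\<lambda>i. (i, n)) ` {i. i < n \<and> P i n}) = card {i. i < n \<and> P i n}"
    by (rule card_image) (auto simp: inj_on_def)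
  finally show ?case using Suc by simp
qed

lemma inv_sum: "int (inv_count L) = (\<Sum>j<length L. \<Sum>i<j. if L ! j < L ! i then 1 else 0)"
  unfolding inv_count_def card_pairs by (simp add: card_lt_sum)

lemma tri_swap: fixes n :: nat shows "(\<Sum>q<n. \<Sum>r\<in>{q<..<n}. g q r) = (\<Sum>r<n. \<Sum>q<r. (g q r :: int))"
proof (induction n)
  case 0 then show ?case by simp
next
  case (Suc n)
  have "(\<Sum>q<Suc n. \<Sum>r\<in>{q<..<Suc n}. g q r) = (\<Sum>q<n. \<Sum>r\<in>{q<..<Suc n}. g q r)"
  proof -
    have "{n<..<Suc n} = {}" by auto
    then show ?thesis by simp
  qed
  also have "\<dots> = (\<Sum>q<n. (\<Sum>r\<in>{q<..<n}. g q r) + g q n)"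
  proof (rule sum.cong)
    fix q assume "q \<in> {..<n}"
    then have "{q<..<Suc n} = insert n {q<..<n}" by auto
    then show "(\<Sum>r\<in>{q<..<Suc n}. g q r) = (\<Sum>r\<in>{q<..<n}. g q r) + g q n" by simp
  qed simp
  finally show ?case using Suc by (simp add: sum.distrib)
qed




locale adm =
  fixes C' :: "nat list" and S :: "nat set"
  assumes adm: "admissible C' S"
begin

abbreviation "n \<equiv> length C'"
abbreviation "c \<equiv> card S"
abbreviation "A \<equiv> set C' - S"
abbreviation "D \<equiv> S - set C'"
abbreviation "B \<equiv> fill_set C' S"
abbreviation "L \<equiv> rev (sorted_list_of_set (fill_set C' S))"
abbreviation "H \<equiv> hatC C' S"
definition "kk r = card {y \<in> set C' - S. C' ! r < y}"

lemma dist: "distinct C'" and finS: "finite S" and cc: "c = n \<or> c = n + 1"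
  and dom: "\<And>r. r < n \<Longrightarrow> sorted_list_of_set S ! r \<le> sort C' ! r"
  using adm unfolding admissible_def by auto

lemma cardC: "card (set C') = n" using dist by (simp add: distinct_card)

lemma cardD: "card D = card A + (c - n)"
proof -
  have "c = card (S \<inter> set C') + card D" using finS card_Int_Diff by blast
  moreover have "n = card (set C' \<inter> S) + card A" using cardC card_Int_Diff[of "set C'" S] by simp
  ultimately show ?thesis using cc by (auto simp: Int_commute)
qed

lemma D_ne: "c = n + 1 \<Longrightarrow> D \<noteq> {}"
proof
  assume "c = n + 1" "D = {}"
  then have "card D = card A + 1" using cardD by simp
  then show False using \<open>D = {}\<close> by simp
qed

lemma finD: "finite D" using finS by simp

lemma B_sub: "B \<subseteq> D" unfolding fill_set_def by auto

lemma finB: "finite B" using B_sub finD finite_subset by blast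

lemma DB: "D - B = (if c = n + 1 then {Max D} else {})"
  using D_ne finD Max_in unfolding fill_set_def by auto

lemma cardDB: "card (D - B) = c - n"
  using DB cc by auto

lemma cardB: "card B = card A"
proof -
  have "card (D - B) = card D - card B" using B_sub finB by (simp add: card_Diff_subset)
  moreover have "card B \<le> card D" using B_sub finD by (rule card_mono[rotated])
  ultimately have "card D = card B + card (D - B)" by simp
  then show ?thesis using cardD cardDB by simp
qed

lemma B_lt_Max: "c = n + 1 \<Longrightarrow> b \<in> B \<Longrightarrow> b < Max D"
proof -
  assume h: "c = n + 1" "b \<in> B"
  then have "b \<in> D" "b \<noteq> Max D" unfolding fill_set_def by auto
  moreover have "b \<le> Max D" using \<open>b \<in> D\<close> finD by simp
  ultimately show ?thesis by simp
qed

lemma L_set: "set L = B" using finB by simp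
lemma L_len: "length L = card A" using finB cardB
  by (metis length_rev length_sorted_list_of_set)
lemma L_sorted: "sorted_wrt (>) L"
proof -
  have "sorted_wrt (<) (sorted_list_of_set B)" using strict_sorted_iff by simp
  then show ?thesis by (simp add: sorted_wrt_rev)
qed
lemma L_dist: "distinct L" by simp

lemma H_len: "length H = c" unfolding hatC_def by simp

lemma H_nth: "r < c \<Longrightarrow> H ! r = hat_entry C' S r" unfolding hatC_def by simp

lemma kk_lt: "r < n \<Longrightarrow> C' ! r \<notin> S \<Longrightarrow> kk r < card A"
proof -
  assume r: "r < n" "C' ! r \<notin> S"
  have m: "C' ! r \<in> A" using r by simp
  have "{y \<in> A. C' ! r < y} \<subseteq> A - {C' ! r}" by blast
  then have "card {y \<in> A. C' ! r < y} \<le> card (A - {C' ! r})" by (intro card_mono) auto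
  also have "\<dots> < card A" using m by (intro card_Diff1_less) auto
  finally show ?thesis unfolding kk_def .
qed

lemma n_le_c: "n \<le> c" using cc by linarith

lemma H_fixed: "r < n \<Longrightarrow> C' ! r \<in> S \<Longrightarrow> H ! r = C' ! r"
proof -
  assume r: "r < n" "C' ! r \<in> S"
  then have "r < c" using n_le_c by linarith
  then show ?thesis using r by (simp add: H_nth hat_entry_def)
qed

lemma H_moved: "r < n \<Longrightarrow> C' ! r \<notin> S \<Longrightarrow> H ! r = L ! kk r"
proof -
  assume r: "r < n" "C' ! r \<notin> S"
  then have "r < c" using n_le_c by linarith
  then have "H ! r = hat_entry C' S r" by (rule H_nth)
  also have "\<dots> = L ! kk r" using r unfolding hat_entry_def kk_def by simp
  finally show ?thesis .
qed

lemma H_moved_B: "r < n \<Longrightarrow> C' ! r \<notin> S \<Longrightarrow> H ! r \<in> B"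
  using H_moved kk_lt L_len L_set nth_mem by metis

lemma H_last: "c = n + 1 \<Longrightarrow> H ! n = Max D"
  by (simp add: H_nth hat_entry_def)

end



lemma card_split_le: "finite X \<Longrightarrow> card X = card {t\<in>X. t \<le> (x::nat)} + card {t\<in>X. x < t}"
proof -
  assume f: "finite X"
  have "X = {t\<in>X. t \<le> x} \<union> {t\<in>X. x < t}" by auto
  then have "card X = card ({t\<in>X. t \<le> x} \<union> {t\<in>X. x < t})" by simp
  also have "\<dots> = card {t\<in>X. t \<le> x} + card {t\<in>X. x < t}"
    by (rule card_Un_disjoint) (use f in auto)
  finally show ?thesis .
qed

context adm begin

lemma sortC: "sort C' = sorted_list_of_set (set C')"
  using dist by (simp add: sorted_list_of_set_sort_remdups distinct_remdups_id)

lemma dom_count: "card {t\<in>set C'. t \<le> x} \<le> card {s\<in>S. s \<le> x}"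
proof -
  define SC where "SC = sorted_list_of_set (set C')"
  define SS where "SS = sorted_list_of_set S"
  define p where "p = card {t\<in>set C'. t \<le> x}"
  have SCs: "sorted SC" "distinct SC" "set SC = set C'" "length SC = n"
    unfolding SC_def using cardC by auto
  have SSs: "sorted SS" "distinct SS" "set SS = S" "length SS = c"
    unfolding SS_def using finS by auto
  have pn: "p \<le> n" unfolding p_def using cardC
    by (metis (no_types, lifting) List.finite_set card_mono mem_Collect_eq subsetI)
  show ?thesis
  proof (cases "p = 0")
    case True
    then have "card {t\<in>set C'. t \<le> x} = 0" unfolding p_def .
    then show ?thesis by linarith
  next
    case False
    have key: "SC ! (p - 1) \<le> x"
    proof (rule ccontr)
      assume "\<not> SC ! (p - 1) \<le> x"
      then have gt: "x < SC ! (p - 1)" by simp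
      have "{t\<in>set C'. t \<le> x} \<subseteq> set (take (p - 1) SC)"
      proof
        fix t assume t: "t \<in> {t\<in>set C'. t \<le> x}"
        then obtain i where i: "i < n" "SC ! i = t" using SCs by (metis in_set_conv_nth mem_Collect_eq)
        have "i < p - 1"
        proof (rule ccontr)
          assume "\<not> i < p - 1"
          then have "SC ! (p - 1) \<le> SC ! i" using SCs i False pn
            by (intro sorted_nth_mono) auto
          then show False using gt t i by simp
        qed
        then show "t \<in> set (take (p - 1) SC)" using i pn
          by (metis in_set_conv_nth length_take min_less_iff_conj nth_take SCs(4))
      qed
      then have "p \<le> card (set (take (p - 1) SC))" unfolding p_def by (intro card_mono) auto
      also have "\<dots> \<le> p - 1" by (metis card_length diff_le_self le_trans length_take min.bounded_iff nat_le_linear) 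
      finally show False using False by simp
    qed
    have "set (take p SS) \<subseteq> {s\<in>S. s \<le> x}"
    proof
      fix s assume "s \<in> set (take p SS)"
      then obtain i where i: "i < p" "i < length SS" "SS ! i = s"
        by (auto simp: in_set_conv_nth)
      have "SS ! i \<le> SS ! (p - 1)" using SSs i pn n_le_c by (intro sorted_nth_mono) auto
      also have "\<dots> \<le> sort C' ! (p - 1)" unfolding SS_def using dom[of "p - 1"] pn False by simp
      also have "\<dots> \<le> x" using key unfolding sortC SC_def .
      finally show "s \<in> {s\<in>S. s \<le> x}" using i SSs by auto
    qed
    then have "card (set (take p SS)) \<le> card {s\<in>S. s \<le> x}" using finS by (intro card_mono) auto
    moreover have "card (set (take p SS)) = p" using SSs pn n_le_c
      by (simp add: distinct_card)
    ultimately show ?thesis unfolding p_def by simp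
  qed
qed

lemma moved_lt: "r < n \<Longrightarrow> C' ! r \<notin> S \<Longrightarrow> H ! r < C' ! r"
proof -
  assume r: "r < n" "C' ! r \<notin> S"
  define x where "x = C' ! r"
  define k where "k = kk r"
  define y where "y = L ! k"
  have Hy: "H ! r = y" unfolding y_def k_def using H_moved r by simp
  have kl: "k < length L" unfolding k_def using kk_lt r L_len by simp
  have yB: "y \<in> B" using H_moved_B[OF r] Hy by simp
  have xC: "x \<in> set C'" unfolding x_def using r by simp
  have yD: "y \<in> D" using yB B_sub by auto
  have yx: "y \<noteq> x" using yD xC by auto
  have s1: "card {s\<in>S. x < s} + n \<le> c + card {t\<in>set C'. x < t}"
    using card_split_le[OF finS, of x] card_split_le[of "set C'" x] dom_count[of x] cardC by simp
  have e1: "card {s\<in>S. x < s} = card {s\<in>S \<inter> set C'. x < s} + card {s\<in>D. x < s}"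
  proof -
    have "{s\<in>S. x < s} = {s\<in>S \<inter> set C'. x < s} \<union> {s\<in>D. x < s}" by auto
    moreover have "card ({s\<in>S \<inter> set C'. x < s} \<union> {s\<in>D. x < s}) = card {s\<in>S \<inter> set C'. x < s} + card {s\<in>D. x < s}"
      by (rule card_Un_disjoint) (use finS in auto)
    ultimately show ?thesis by simp
  qed
  have e2: "card {t\<in>set C'. x < t} = card {s\<in>S \<inter> set C'. x < s} + card {t\<in>A. x < t}"
  proof -
    have "{t\<in>set C'. x < t} = {s\<in>S \<inter> set C'. x < s} \<union> {t\<in>A. x < t}" by auto
    moreover have "card ({s\<in>S \<inter> set C'. x < s} \<union> {t\<in>A. x < t}) = card {s\<in>S \<inter> set C'. x < s} + card {t\<in>A. x < t}"
      by (rule card_Un_disjoint) auto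
    ultimately show ?thesis by simp
  qed
  have kA: "card {t\<in>A. x < t} = k" unfolding k_def kk_def x_def by simp
  have s2: "card {s\<in>D. x < s} + n \<le> c + k" using s1 e1 e2 kA by simp
  show ?thesis
  proof (rule ccontr)
    assume "\<not> H ! r < C' ! r"
    then have xy: "x < y" using Hy yx unfolding x_def by simp
    have sub: "set (take (Suc k) L) \<union> (D - B) \<subseteq> {s\<in>D. x < s}"
    proof
      fix z assume z: "z \<in> set (take (Suc k) L) \<union> (D - B)"
      show "z \<in> {s\<in>D. x < s}"
      proof (cases "z \<in> D - B")
        case True
        then have "c = n + 1" "z = Max D" using DB by (auto split: if_splits)
        then have "y \<le> z" using yD finD by simp
        then show ?thesis using True xy by simp
      next
        case False
        then have zt: "z \<in> set (take (Suc k) L)" using z by blast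
        then obtain i where i: "i < Suc k" "i < length L" "L ! i = z" by (auto simp: in_set_conv_nth)
        have "y \<le> z"
        proof (cases "i = k")
          case True then show ?thesis using i y_def by simp
        next
          case False
          then have "L ! k < L ! i" using L_sorted i kl by (intro sorted_wrt_nth_less[where P = "(>)", simplified]) auto
          then show ?thesis using i y_def by simp
        qed
        moreover have "z \<in> B" using i L_set nth_mem by metis
        ultimately show ?thesis using xy B_sub by auto
      qed
    qed
    have "card (set (take (Suc k) L) \<union> (D - B)) = card (set (take (Suc k) L)) + card (D - B)"
    proof (rule card_Un_disjoint)
      show "set (take (Suc k) L) \<inter> (D - B) = {}" using L_set by (auto dest: in_set_takeD)
    qed (use finD in auto)
    moreover have "card (set (take (Suc k) L)) = Suc k" using kl L_dist by (simp add: distinct_card)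
    moreover have "card (set (take (Suc k) L) \<union> (D - B)) \<le> card {s\<in>D. x < s}"
      using sub finD by (intro card_mono) auto
    ultimately show False using s2 cardDB n_le_c by simp
  qed
qed

lemma moved_mono: "i < n \<Longrightarrow> j < n \<Longrightarrow> C' ! i \<notin> S \<Longrightarrow> C' ! j \<notin> S \<Longrightarrow> C' ! i < C' ! j \<Longrightarrow> H ! i < H ! j"
proof -
  assume h: "i < n" "j < n" "C' ! i \<notin> S" "C' ! j \<notin> S" "C' ! i < C' ! j"
  have m: "C' ! j \<in> {y\<in>A. C' ! i < y}" using h by simp
  have "{y\<in>A. C' ! j < y} \<subseteq> {y\<in>A. C' ! i < y} - {C' ! j}" using h by auto
  then have "kk j \<le> card ({y\<in>A. C' ! i < y} - {C' ! j})" unfolding kk_def by (intro card_mono) auto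
  also have "\<dots> < kk i" unfolding kk_def using m by (intro card_Diff1_less) auto
  finally have lt: "kk j < kk i" .
  have "L ! kk i < L ! kk j" using L_sorted lt kk_lt[OF h(1) h(3)] L_len
    by (intro sorted_wrt_nth_less[where P = "(>)", simplified]) auto
  then show ?thesis using H_moved h by simp
qed

lemma moved_notin: "r < n \<Longrightarrow> C' ! r \<notin> S \<Longrightarrow> H ! r \<notin> set C'"
  using H_moved_B B_sub by auto

end



context adm begin

definition I :: "bool \<Rightarrow> int" where "I b = (if b then 1 else 0)"

lemma pointwise:
  assumes ij: "i < j" "j < n"
  shows "I (H ! j < H ! i) = I (C' ! j < C' ! i)
     + I (C' ! j \<notin> S \<and> C' ! i \<in> S \<and> H ! j < C' ! i \<and> C' ! i < C' ! j)
     - I (C' ! i \<notin> S \<and> C' ! j \<in> S \<and> H ! i < C' ! j \<and> C' ! j < C' ! i)"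
proof -
  have i: "i < n" using ij by simp
  have ne: "C' ! i \<noteq> C' ! j" using dist ij by (simp add: nth_eq_iff_index_eq)
  show ?thesis
  proof (cases "C' ! i \<in> S")
    case ci: True
    show ?thesis
    proof (cases "C' ! j \<in> S")
      case True then show ?thesis using ci H_fixed i ij by (simp add: I_def)
    next
      case False
      have a: "H ! j < C' ! j" using moved_lt ij False by simp
      have b: "H ! j \<noteq> C' ! i" using moved_notin[OF ij(2) False] i by auto
      show ?thesis using a b ci False H_fixed[OF i ci] by (auto simp: I_def)
    qed
  next
    case ci: False
    show ?thesis
    proof (cases "C' ! j \<in> S")
      case True
      have a: "H ! i < C' ! i" using moved_lt i ci by simp
      have b: "H ! i \<noteq> C' ! j" using moved_notin[OF i ci] ij by auto
      show ?thesis using a b ci True H_fixed[OF ij(2) True] by (auto simp: I_def)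
    next
      case False
      have "H ! j < H ! i \<longleftrightarrow> C' ! j < C' ! i"
        using moved_mono[OF i ij(2) ci False] moved_mono[OF ij(2) i False ci] ne
        by (meson linorder_neqE_nat order.asym)
      then show ?thesis using ci False by (simp add: I_def)
    qed
  qed
qed

lemma extra: "c = n + 1 \<Longrightarrow> i < n \<Longrightarrow> I (H ! n < H ! i) = I (C' ! i \<in> S \<and> H ! n < C' ! i)"
proof -
  assume h: "c = n + 1" "i < n"
  show ?thesis
  proof (cases "C' ! i \<in> S")
    case True then show ?thesis using H_fixed h by (simp add: I_def)
  next
    case False
    have "H ! i < H ! n" using B_lt_Max[OF h(1) H_moved_B[OF h(2) False]] H_last[OF h(1)] by simp
    then show ?thesis using False by (simp add: I_def)
  qed
qed

lemma piv: "pivots C' S = {q\<in>{..<n}. C' ! q \<notin> S} \<union> {q. q = n \<and> n < c}"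
proof -
  have "\<And>q. q < n \<Longrightarrow> (H ! q < C' ! q \<longleftrightarrow> C' ! q \<notin> S)"
    using moved_lt H_fixed by fastforce
  then show ?thesis unfolding pivots_def by auto
qed

lemma Nhat_eq: "int (Nhat C' S) = (\<Sum>q<n. \<Sum>r<q. I (C' ! q \<notin> S \<and> C' ! r \<in> S \<and> between C' S q r))
   + (if c = n + 1 then (\<Sum>r<n. I (C' ! r \<in> S \<and> H ! n < C' ! r)) else 0)"
proof -
  define X where "X q = int (card {r. r < q \<and> C' ! r \<in> S \<and> between C' S q r})" for q
  have X: "X q = (\<Sum>r<q. I (C' ! r \<in> S \<and> between C' S q r))" for q
    unfolding X_def card_lt_sum I_def ..
  have "int (Nhat C' S) = (\<Sum>q\<in>pivots C' S. X q)" unfolding Nhat_def X_def by simp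
  also have "\<dots> = (\<Sum>q\<in>{q\<in>{..<n}. C' ! q \<notin> S}. X q) + (\<Sum>q\<in>{q. q = n \<and> n < c}. X q)"
    unfolding piv by (rule sum.union_disjoint) auto
  also have "(\<Sum>q\<in>{q\<in>{..<n}. C' ! q \<notin> S}. X q) = (\<Sum>q<n. if C' ! q \<notin> S then X q else 0)"
    by (rule sum.inter_filter) simp
  also have "\<dots> = (\<Sum>q<n. \<Sum>r<q. I (C' ! q \<notin> S \<and> C' ! r \<in> S \<and> between C' S q r))"
    unfolding X by (rule sum.cong) (auto simp: I_def)
  also have "(\<Sum>q\<in>{q. q = n \<and> n < c}. X q) = (if c = n + 1 then (\<Sum>r<n. I (C' ! r \<in> S \<and> H ! n < C' ! r)) else 0)"
  proof (cases "c = n + 1")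
    case True
    then have "{q. q = n \<and> n < c} = {n}" by auto
    then show ?thesis using True unfolding X by (simp add: between_def)
  next
    case False
    then have "{q. q = n \<and> n < c} = {}" using cc by auto
    then show ?thesis using False by simp
  qed
  finally show ?thesis .
qed

lemma Ncheck_eq: "int (Ncheck C' S) = (\<Sum>r<n. \<Sum>q<r. I (C' ! q \<notin> S \<and> C' ! r \<in> S \<and> between C' S q r))"
proof -
  define X where "X q = int (card {r. q < r \<and> r < n \<and> C' ! r \<in> S \<and> between C' S q r})" for q
  have X: "X q = (\<Sum>r\<in>{q<..<n}. I (C' ! r \<in> S \<and> between C' S q r))" for q
    unfolding X_def card_gt_sum I_def ..
  have "int (Ncheck C' S) = (\<Sum>q\<in>pivots C' S. X q)" unfolding Ncheck_def X_def by simp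
  also have "\<dots> = (\<Sum>q\<in>{q\<in>{..<n}. C' ! q \<notin> S}. X q) + (\<Sum>q\<in>{q. q = n \<and> n < c}. X q)"
    unfolding piv by (rule sum.union_disjoint) auto
  also have "(\<Sum>q\<in>{q. q = n \<and> n < c}. X q) = 0"
  proof -
    have "X n = 0" unfolding X_def by simp
    then show ?thesis by (cases "n < c") auto
  qed
  also have "(\<Sum>q\<in>{q\<in>{..<n}. C' ! q \<notin> S}. X q) = (\<Sum>q<n. if C' ! q \<notin> S then X q else 0)"
    by (rule sum.inter_filter) simp
  also have "\<dots> = (\<Sum>q<n. \<Sum>r\<in>{q<..<n}. I (C' ! q \<notin> S \<and> C' ! r \<in> S \<and> between C' S q r))"
    unfolding X by (rule sum.cong) (auto simp: I_def)
  also have "\<dots> = (\<Sum>r<n. \<Sum>q<r. I (C' ! q \<notin> S \<and> C' ! r \<in> S \<and> between C' S q r))"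
    by (rule tri_swap)
  finally show ?thesis by simp
qed

lemma inv_H: "int (inv_count H) = (\<Sum>j<n. \<Sum>i<j. I (H ! j < H ! i))
   + (if c = n + 1 then (\<Sum>i<n. I (H ! n < H ! i)) else 0)"
proof -
  have "int (inv_count H) = (\<Sum>j<c. \<Sum>i<j. I (H ! j < H ! i))"
    unfolding inv_sum H_len I_def ..
  then show ?thesis using cc by (auto simp: sum.distrib)
qed

lemma main: "int (inv_count H) = int (inv_count C') + int (Nhat C' S) - int (Ncheck C' S)"
proof -
  have invC: "int (inv_count C') = (\<Sum>j<n. \<Sum>i<j. I (C' ! j < C' ! i))"
    unfolding inv_sum I_def ..
  have "(\<Sum>j<n. \<Sum>i<j. I (H ! j < H ! i)) = (\<Sum>j<n. \<Sum>i<j. I (C' ! j < C' ! i)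
     + I (C' ! j \<notin> S \<and> C' ! i \<in> S \<and> between C' S j i)
     - I (C' ! i \<notin> S \<and> C' ! j \<in> S \<and> between C' S i j))"
    by (intro sum.cong refl) (simp add: pointwise between_def)
  also have "\<dots> = (\<Sum>j<n. \<Sum>i<j. I (C' ! j < C' ! i))
     + (\<Sum>j<n. \<Sum>i<j. I (C' ! j \<notin> S \<and> C' ! i \<in> S \<and> between C' S j i))
     - (\<Sum>j<n. \<Sum>i<j. I (C' ! i \<notin> S \<and> C' ! j \<in> S \<and> between C' S i j))"
    by (simp add: sum.distrib sum_subtractf)
  finally have a: "(\<Sum>j<n. \<Sum>i<j. I (H ! j < H ! i)) = \<dots>" .
  have b: "(if c = n + 1 then (\<Sum>i<n. I (H ! n < H ! i)) else 0)
      = (if c = n + 1 then (\<Sum>r<n. I (C' ! r \<in> S \<and> H ! n < C' ! r)) else 0)"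
    using extra by simp
  show ?thesis unfolding inv_H Nhat_eq Ncheck_eq invC a b by simp
qed

end



theorem lemma4p8:
  fixes C' :: "nat list" and S :: "nat set"
  assumes "admissible C' S"
  shows "int (inv_count (hatC C' S)) = int (inv_count C') + int (Nhat C' S) - int (Ncheck C' S)"
proof -
  interpret adm C' S using assms by unfold_locales
  show ?thesis by (rule main)
qed

end
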